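(* Let $k > 0$, let $\mathcal{J} \subseteq \{1,\dots,n\}$, and let ${\mathbf{x}}^* = k\sum_{j\in\mathcal{J}} {\mathbf{e}}_j$. Suppose there is a vector ${\mathbf{c}}$ with $$\frac{P {\mathbf{e}}_j}{\| P {\mathbf{e}}_j \|_2} \cdot {\mathbf{c}} = 1 \ \ \forall j \in \mathcal{J}, \qquad \frac{P {\mathbf{e}}_i}{\| P {\mathbf{e}}_i \|_2} \cdot {\mathbf{c}} < 1 \ \ \forall i \in \mathcal{J}^c.$$ Then ${\mathbf{x}}^*$ is the unique solution of $$\min_{0 \leq {\mathbf{x}} \leq k} \| W {\mathbf{x}} \|_1 \quad \text{subject to} \quad A {\mathbf{x}} = A {\mathbf{x}}^*.$$
   Context: $A \in \mathbb{R}^{m\times n}$ is a matrix, $A^\dagger$ its Moore–Penrose pseudoinverse, and $P = A^\dagger A$ the orthogonal projection onto $\mathcal{N}(A)^\perp$. ${\mathbf{e}}_1,\dots,{\mathbf{e}}_n$ are the standard unit vectors, assumed not to lie in $\mathcal{N}(A)$, so $w_i := \|P{\mathbf{e}}_i\|_2 > 0$; $W = \mathrm{diag}(w_1,\dots,w_n)$. Inequalities $0\le{\mathbf{x}}\le k$ are componentwise. *)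

theory Defs
  imports "HOL-Analysis.Analysis"
begin

text \<open>Moore--Penrose pseudoinverse, characterised by the four Penrose conditions
  (the matrix satisfying them exists and is unique).\<close>
definition penrose :: "real^'n^'m \<Rightarrow> real^'m^'n \<Rightarrow> bool" where
  "penrose A X \<longleftrightarrow> A ** X ** A = A \<and> X ** A ** X = X \<and>
     transpose (A ** X) = A ** X \<and> transpose (X ** A) = X ** A"

definition pinv :: "real^'n^'m \<Rightarrow> real^'m^'n" where
  "pinv A = (SOME X. penrose A X)"

definition projP :: "real^'n^'m \<Rightarrow> real^'n^'n" where
  "projP A = pinv A ** A"

definition wts :: "real^'n^'m \<Rightarrow> 'n \<Rightarrow> real" where
  "wts A i = norm (projP A *v axis i 1)"

definition Wmat :: "real^'n^'m \<Rightarrow> real^'n^'n" where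
  "Wmat A = (\<chi> i j. if i = j then wts A i else 0)"

definition norm1 :: "real^'n \<Rightarrow> real" where
  "norm1 x = (\<Sum>i\<in>UNIV. \<bar>x $ i\<bar>)"

end

theory Submission imports Defs begin

lemma transpose_add': "transpose (A + B) = transpose A + transpose (B::real^'n^'m)"
  by (simp add: transpose_def vec_eq_iff)

lemma matrix_add_rdistrib': "((B + C) ** A) = (B ** A) + (C ** (A::real^'p^'n))"
  for B C :: "real^'n^'m"
  by (vector matrix_matrix_mult_def sum.distrib[symmetric] field_simps)

lemma matrix_diff_rdistrib': "((B - C) ** A) = (B ** A) - (C ** (A::real^'p^'n))"
  for B C :: "real^'n^'m"
  by (vector matrix_matrix_mult_def sum_subtractf[symmetric] field_simps)

lemma matrix_diff_ldistrib': "(A ** (B - C)) = (A ** B) - (A ** C)"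
  for B C :: "real^'p^'n" and A :: "real^'n^'m"
  by (vector matrix_matrix_mult_def sum_subtractf[symmetric] field_simps)

lemma proj_exists:
  fixes A :: "real^'n^'m"
  obtains Q :: "real^'n^'n" where "transpose Q = Q" "A ** Q = 0" "Q ** Q = Q"
    "\<And>x. A *v x = 0 \<Longrightarrow> Q *v x = x"
    "\<And>x. inner x (Q *v x) = 0 \<Longrightarrow> Q *v x = 0"
proof -
  have sub: "subspace {x. A *v x = 0}"
    by (simp add: subspace_def matrix_vector_right_distrib matrix_vector_mult_scaleR)
  obtain B where B: "B \<subseteq> {x. A *v x = 0}" "pairwise orthogonal B"
      "\<And>x. x \<in> B \<Longrightarrow> norm x = 1" "independent B" "span B = {x. A *v x = 0}"
    using orthonormal_basis_subspace[OF sub] by metis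
  have fin: "finite B" using B(4) independent_imp_finite by blast
  define Q :: "real^'n^'n" where "Q = (\<chi> i j. \<Sum>b\<in>B. b$i * b$j)"
  have Qv: "Q *v x = (\<Sum>b\<in>B. (x \<bullet> b) *\<^sub>R b)" for x
    by (simp add: vec_eq_iff Q_def matrix_vector_mult_def inner_vec_def sum_distrib_left
       sum_distrib_right mult_ac) (simp add: sum.swap[of _ B])
  have inspan: "Q *v x \<in> span B" for x
    unfolding Qv by (simp add: span_clauses span_sum)
  have ex: "Q *v x = x" if "x \<in> span B" for x
    unfolding Qv using orthonormal_basis_expand[OF B(2) B(3) that fin] .
  show ?thesis
  proof
    show "transpose Q = Q" by (simp add: Q_def transpose_def vec_eq_iff mult.commute)
    show "A ** Q = 0" unfolding matrix_eq
      using inspan B(5) by (simp add: matrix_vector_mul_assoc[symmetric])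
    show "Q ** Q = Q" unfolding matrix_eq
      using inspan ex by (simp add: matrix_vector_mul_assoc[symmetric])
    show "Q *v x = x" if "A *v x = 0" for x using ex B(5) that by auto
    show "Q *v x = 0" if "inner x (Q *v x) = 0" for x
    proof -
      have "inner x (Q *v x) = (\<Sum>b\<in>B. (x \<bullet> b)^2)"
        unfolding Qv by (simp add: inner_sum_right power2_eq_square)
      then have "\<forall>b\<in>B. (x \<bullet> b)^2 = 0" using that fin
        by (simp add: sum_nonneg_eq_0_iff)
      then show ?thesis unfolding Qv by simp
    qed
  qed
qed

lemma penrose_exists:
  fixes A :: "real^'n^'m"
  shows "\<exists>X. penrose A X"
proof -
  obtain Q :: "real^'n^'n" where Q: "transpose Q = Q" "A ** Q = 0" "Q ** Q = Q"
    "\<And>x. A *v x = 0 \<Longrightarrow> Q *v x = x"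
    "\<And>x. inner x (Q *v x) = 0 \<Longrightarrow> Q *v x = 0"
    using proj_exists by blast
  define M where "M = transpose A ** A + Q"
  have Msym: "transpose M = M" unfolding M_def
    by (simp add: transpose_add' matrix_transpose_mul Q(1))
  have inj: "x = 0" if "M *v x = 0" for x
  proof -
    have "inner x (M *v x) = inner (A *v x) (A *v x) + inner x (Q *v x)"
      unfolding M_def
      by (simp add: matrix_vector_mult_add_rdistrib inner_add_right
          matrix_vector_mul_assoc[symmetric] dot_lmul_matrix[symmetric] inner_commute)
    moreover have "inner x (Q *v x) = inner (Q *v x) (Q *v x)"
    proof -
      have "inner x (Q *v x) = inner x (Q *v (Q *v x))"
        by (simp add: matrix_vector_mul_assoc Q(3))
      also have "\<dots> = inner (x v* Q) (Q *v x)" by (simp add: dot_lmul_matrix)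
      also have "x v* Q = Q *v x"
        by (metis Q(1) transpose_matrix_vector)
      finally show ?thesis .
    qed
    ultimately have "inner (A *v x) (A *v x) + inner (Q *v x) (Q *v x) = 0"
      using that by simp
    then have "A *v x = 0" "Q *v x = 0"
      by (metis add_nonneg_eq_0_iff inner_eq_zero_iff inner_ge_zero)+
    then show ?thesis using Q(4) by metis
  qed
  then obtain G where G: "G ** M = mat 1"
    using matrix_left_invertible_ker by blast
  then have G2: "M ** G = mat 1" using matrix_left_right_inverse by blast
  have Gsym: "transpose G = G"
  proof -
    have "transpose G ** M = mat 1"
      using arg_cong[OF G2, of transpose] by (simp add: matrix_transpose_mul Msym)
    have "transpose G = transpose G ** (M ** G)" by (simp add: G2)
    also have "\<dots> = (transpose G ** M) ** G" by (rule matrix_mul_assoc)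
    also have "\<dots> = G" using \<open>transpose G ** M = mat 1\<close> by simp
    finally show ?thesis .
  qed
  have AtQ: "transpose A ** A ** Q = 0"
    by (simp add: matrix_mul_assoc[symmetric] Q(2))
  have MQ: "M ** Q = Q" unfolding M_def
    by (simp add: matrix_add_rdistrib' AtQ Q(3))
  have GQ: "G ** Q = Q"
    by (metis G MQ matrix_mul_assoc matrix_mul_lid)
  have QG: "Q ** G = Q"
    by (metis GQ Gsym Q(1) matrix_transpose_mul)
  have QAt: "Q ** transpose A = 0"
    by (metis Q(1) Q(2) matrix_transpose_mul transpose_iff transpose_transpose
        times0_right transpose_def vec_eq_iff zero_index)
  define X where "X = G ** transpose A"
  have XA: "X ** A = mat 1 - Q"
  proof -
    have "X ** A = G ** (M - Q)" unfolding X_def M_def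
      by (simp add: matrix_mul_assoc)
    also have "\<dots> = mat 1 - Q" by (simp add: matrix_diff_ldistrib' G GQ)
    finally show ?thesis .
  qed
  have "penrose A X"
    unfolding penrose_def
  proof (intro conjI)
    show "A ** X ** A = A"
      by (simp add: matrix_mul_assoc[symmetric] XA matrix_diff_ldistrib' Q(2))
    show "X ** A ** X = X"
      by (simp add: XA matrix_diff_rdistrib') (simp add: X_def matrix_mul_assoc QG QAt)
    show "transpose (A ** X) = A ** X"
      by (simp add: X_def matrix_transpose_mul Gsym matrix_mul_assoc)
    show "transpose (X ** A) = X ** A"
      by (simp add: XA transpose_def vec_eq_iff mat_def)
        (metis Q(1) transpose_def vec_lambda_beta)
  qed
  then show ?thesis by blast
qed

theorem corollary3:
  fixes A :: "real^'n^'m" and k :: real and J :: "'n set" and c :: "real^'n"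
  assumes notnull: "\<forall>i. A *v axis i 1 \<noteq> 0"
    and kpos: "k > 0"
    and cJ: "\<forall>j\<in>J. inner ((1 / wts A j) *\<^sub>R (projP A *v axis j 1)) c = 1"
    and cJc: "\<forall>i\<in>UNIV - J. inner ((1 / wts A i) *\<^sub>R (projP A *v axis i 1)) c < 1"
  defines "xstar \<equiv> k *\<^sub>R (\<Sum>j\<in>J. axis j (1::real))"
  shows "(\<forall>i. 0 \<le> xstar $ i \<and> xstar $ i \<le> k) \<and>
         (\<forall>x. (\<forall>i. 0 \<le> x $ i \<and> x $ i \<le> k) \<and> A *v x = A *v xstar
              \<longrightarrow> norm1 (Wmat A *v xstar) \<le> norm1 (Wmat A *v x)) \<and>
         (\<forall>x. (\<forall>i. 0 \<le> x $ i \<and> x $ i \<le> k) \<and> A *v x = A *v xstar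
              \<and> norm1 (Wmat A *v x) \<le> norm1 (Wmat A *v xstar) \<longrightarrow> x = xstar)"
proof -
  define P where "P = projP A"
  define w where "w = wts A"
  have pen: "penrose A (pinv A)"
    unfolding pinv_def using penrose_exists someI_ex by metis
  have Psym: "transpose P = P" using pen by (simp add: penrose_def P_def projP_def)
  have AP: "A ** P = A" using pen by (simp add: penrose_def P_def projP_def matrix_mul_assoc)
  have wpos: "w i > 0" for i
  proof -
    have "A *v (P *v axis i 1) = A *v axis i 1"
      by (simp add: matrix_vector_mul_assoc AP)
    then have "P *v axis i 1 \<noteq> 0" using notnull by force
    then show ?thesis by (simp add: w_def wts_def P_def)
  qed
  define p where "p = P *v c"
  have Pe: "inner (P *v axis i 1) c = p $ i" for i
  proof -
    have "inner (P *v axis i 1) c = inner (axis i 1) (transpose P *v c)"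
      by (metis dot_lmul_matrix inner_commute transpose_matrix_vector)
    moreover have "inner (axis i 1) v = v $ i" for v :: "real^'n"
      by (simp add: inner_vec_def axis_def if_distrib if_distribR cong: if_cong)
    ultimately show ?thesis by (simp add: Psym p_def)
  qed
  have pJ: "p $ j = w j" if "j \<in> J" for j
    using cJ that wpos[of j] Pe[of j] by (simp add: P_def w_def field_simps)
  have pJc: "p $ i < w i" if "i \<notin> J" for i
  proof -
    have "(projP A *v axis i 1) \<bullet> c / wts A i < 1" using cJc that by simp
    then show ?thesis using wpos[of i] Pe[of i] by (simp add: P_def w_def divide_less_eq)
  qed
  have pw: "p $ i \<le> w i" for i using pJ pJc by (metis order.order_iff_strict)
  have xs: "xstar $ i = (if i \<in> J then k else 0)" for i
    by (simp add: xstar_def axis_def sum.delta' if_distrib cong: if_cong)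
  have box: "\<forall>i. 0 \<le> xstar $ i \<and> xstar $ i \<le> k" using xs kpos by simp
  have nW: "norm1 (Wmat A *v x) = (\<Sum>i\<in>UNIV. w i * x $ i)" if "\<forall>i. 0 \<le> x $ i" for x
  proof -
    have "(Wmat A *v x) $ i = w i * x $ i" for i
      by (simp add: Wmat_def matrix_vector_mult_def w_def if_distrib if_distribR cong: if_cong)
    then show ?thesis unfolding norm1_def using that wpos
      by (simp add: abs_mult less_imp_le)
  qed
  have pdot: "(\<Sum>i\<in>UNIV. p $ i * x $ i) = (\<Sum>i\<in>UNIV. p $ i * xstar $ i)"
    if "A *v x = A *v xstar" for x
  proof -
    have Px: "P *v x = P *v xstar"
      unfolding P_def projP_def by (metis matrix_vector_mul_assoc that)
    have "(\<Sum>i\<in>UNIV. p $ i * x $ i) = inner (P *v c) x" by (simp add: inner_vec_def p_def)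
    also have "\<dots> = inner c (P *v x)"
      by (metis Psym dot_lmul_matrix transpose_matrix_vector)
    also have "\<dots> = inner (P *v c) xstar" unfolding Px
      by (metis Psym dot_lmul_matrix transpose_matrix_vector)
    finally show ?thesis by (simp add: inner_vec_def p_def)
  qed
  have key: "norm1 (Wmat A *v x) - norm1 (Wmat A *v xstar) = (\<Sum>i\<in>UNIV. (w i - p $ i) * x $ i)"
    if "\<forall>i. 0 \<le> x $ i" "A *v x = A *v xstar" for x
  proof -
    have "norm1 (Wmat A *v xstar) = (\<Sum>i\<in>UNIV. p $ i * xstar $ i)"
      using nW[of xstar] box xs pJ by (auto intro!: sum.cong)
    then show ?thesis using nW[OF that(1)] pdot[OF that(2)]
      by (simp add: algebra_simps sum_subtractf)
  qed
  show ?thesis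
  proof (intro conjI allI impI)
    show "0 \<le> xstar $ i" "xstar $ i \<le> k" for i using box by auto
  next
    fix x assume h: "(\<forall>i. 0 \<le> x $ i \<and> x $ i \<le> k) \<and> A *v x = A *v xstar"
    have "0 \<le> (\<Sum>i\<in>UNIV. (w i - p $ i) * x $ i)"
      using h pw by (intro sum_nonneg) simp
    then show "norm1 (Wmat A *v xstar) \<le> norm1 (Wmat A *v x)" using key h by fastforce
  next
    fix x assume h: "(\<forall>i. 0 \<le> x $ i \<and> x $ i \<le> k) \<and> A *v x = A *v xstar
              \<and> norm1 (Wmat A *v x) \<le> norm1 (Wmat A *v xstar)"
    have nn: "\<forall>i\<in>UNIV. 0 \<le> (w i - p $ i) * x $ i" using h pw by simp
    have "(\<Sum>i\<in>UNIV. (w i - p $ i) * x $ i) \<le> 0" using key h by fastforce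
    then have "(\<Sum>i\<in>UNIV. (w i - p $ i) * x $ i) = 0" using sum_nonneg[of UNIV "\<lambda>i. (w i - p $ i) * x $ i"] nn by auto
    then have z: "\<forall>i. (w i - p $ i) * x $ i = 0" using nn by (simp add: sum_nonneg_eq_0_iff)
    have x0: "x $ i = 0" if "i \<notin> J" for i using z[rule_format, of i] pJc[OF that] by simp
    have nn2: "\<forall>i\<in>UNIV. 0 \<le> p $ i * (xstar $ i - x $ i)"
    proof
      fix i :: 'n
      show "0 \<le> p $ i * (xstar $ i - x $ i)"
      proof (cases "i \<in> J")
        case True
        have "0 \<le> w i" using wpos[of i] by simp
        moreover have "0 \<le> xstar $ i - x $ i" using h xs True by simp
        ultimately show ?thesis using pJ[OF True] by simp
      next
        case False then show ?thesis using x0 xs by simp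
      qed
    qed
    have "(\<Sum>i\<in>UNIV. p $ i * (xstar $ i - x $ i)) = 0"
      using pdot[of x] h by (simp add: algebra_simps sum_subtractf)
    then have z2: "\<forall>i. p $ i * (xstar $ i - x $ i) = 0" using nn2 by (simp add: sum_nonneg_eq_0_iff)
    show "x = xstar"
    proof (rule vec_eq_iff[THEN iffD2], rule allI)
      fix i show "x $ i = xstar $ i"
      proof (cases "i \<in> J")
        case True
        then show ?thesis using z2[rule_format, of i] pJ[OF True] wpos[of i] by simp
      next
        case False then show ?thesis using x0 xs by simp
      qed
    qed
  qed
qed

end
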